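(* Let $f_1,\dots,f_n$ satisfy Assumption A1 and let $f_0:\mathbb{R}^d\to\mathbb{R}$ be smooth. If $x\in\mathrm{Pareto}(F)$ is such that $\{\nabla f_1(x),\dots,\nabla f_n(x)\}$ is Pareto generic and $x$ is weakly preference stationary, then $x$ is preference stationary.
   Context: Assumption A1: each $f_i:\mathbb{R}^d\to\mathbb{R}$ is twice differentiable with $\mu\mathbf{I}\preceq\nabla^2 f_i\preceq L\mathbf{I}$, $0<\mu\le L$. $F=(f_1,\dots,f_n)$, $\nabla F(x)\in\mathbb{R}^{n\times d}$ its Jacobian, $\Delta^{n-1}$ the simplex, $f_\beta=\sum_i\beta_if_i$, $x^*(\beta)=x_\beta=\operatorname{argmin}_xf_\beta(x)$ with $\nabla x^*(\beta)=-\nabla^2f_\beta(x_\beta)^{-1}\nabla F(x_\beta)^\top$. $\mathrm{Pareto}(F)$ is the set of Pareto optimal points (equivalently $x$ with $\nabla f_\beta(x)=0$ for some $\beta\in\Delta^{n-1}$). Let $\Delta^{n-1}(x):=\{\beta\in\Delta^{n-1}:\nabla f_\beta(x)=0\}$. A point $x\in\mathrm{Pareto}(F)$ is weakly preference stationary if there exists $\beta\in\Delta^{n-1}(x)$ with $-\nabla(f_0\circ x^* )(\beta)^\top(\beta'-\beta)\le0$ for all $\beta'\in\Delta^{n-1}$; it is preference stationary if this holds for all $\beta\in\Delta^{n-1}(x)$. A set $\{v_1,\dots,v_n\}\subset\mathbb{R}^d$ is Pareto generic if $\beta_1v_1+\dots+\beta_nv_n=0$ for some $\beta\in\Delta^{n-1}$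 and $\mathrm{rank}(v_1,\dots,v_n)=n-1$. *)

theory Defs
  imports "HOL-Analysis.Analysis"
begin

definition grad :: "(real^'d \<Rightarrow> real) \<Rightarrow> real^'d \<Rightarrow> real^'d" where
  "grad g x = (THE v. (g has_derivative (\<lambda>h. v \<bullet> h)) (at x))"

definition hess :: "(real^'d \<Rightarrow> real) \<Rightarrow> real^'d \<Rightarrow> real^'d^'d" where
  "hess g x = (THE H. (grad g has_derivative (\<lambda>h. H *v h)) (at x))"

definition A1 :: "('n::finite \<Rightarrow> real^'d \<Rightarrow> real) \<Rightarrow> real \<Rightarrow> real \<Rightarrow> bool" where
  "A1 f \<mu> L \<longleftrightarrow> 0 < \<mu> \<and> \<mu> \<le> L \<and>
     (\<forall>i. \<exists>g H. \<forall>x. (f i has_derivative (\<lambda>h. g x \<bullet> h)) (at x)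
              \<and> (g has_derivative (\<lambda>h. H x *v h)) (at x)
              \<and> (\<forall>v. \<mu> * (v \<bullet> v) \<le> v \<bullet> (H x *v v) \<and> v \<bullet> (H x *v v) \<le> L * (v \<bullet> v)))"

coinductive smooth :: "(real^'d \<Rightarrow> real) \<Rightarrow> bool" where
  "continuous_on UNIV g \<Longrightarrow>
   (\<forall>j. \<exists>h. (\<forall>x. ((\<lambda>t. g (x + t *\<^sub>R axis j 1)) has_real_derivative h x) (at 0)) \<and> smooth h)
   \<Longrightarrow> smooth g"

definition std_simplex :: "(real^'n) set" where
  "std_simplex = {\<beta>. (\<forall>i. 0 \<le> \<beta> $ i) \<and> (\<Sum>i\<in>UNIV. \<beta> $ i) = 1}"

definition fbeta :: "('n::finite \<Rightarrow> real^'d \<Rightarrow> real) \<Rightarrow> real^'n \<Rightarrow> real^'d \<Rightarrow> real" where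
  "fbeta f \<beta> x = (\<Sum>i\<in>UNIV. \<beta> $ i * f i x)"

definition xstar :: "('n::finite \<Rightarrow> real^'d \<Rightarrow> real) \<Rightarrow> real^'n \<Rightarrow> real^'d" where
  "xstar f \<beta> = (THE x. \<forall>y. fbeta f \<beta> x \<le> fbeta f \<beta> y)"

definition jac :: "('n::finite \<Rightarrow> real^'d \<Rightarrow> real) \<Rightarrow> real^'d \<Rightarrow> real^'d^'n" where
  "jac f x = (\<chi> i. grad (f i) x)"

text \<open>Gradient of f_0 o x^* at beta, via the chain rule and
  grad x^*(beta) = - (hess f_beta (x_beta))^{-1} (grad F (x_beta))^T.\<close>
definition pref_grad :: "(real^'d \<Rightarrow> real) \<Rightarrow> ('n::finite \<Rightarrow> real^'d \<Rightarrow> real) \<Rightarrow> real^'n \<Rightarrow> real^'n" where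
  "pref_grad f0 f \<beta> =
     (let x\<beta> = xstar f \<beta>;
          Dx = - (matrix_inv (hess (fbeta f \<beta>) x\<beta>) ** transpose (jac f x\<beta>))
      in transpose Dx *v grad f0 x\<beta>)"

definition pareto :: "('n::finite \<Rightarrow> real^'d \<Rightarrow> real) \<Rightarrow> (real^'d) set" where
  "pareto f = {x. \<not> (\<exists>y. (\<forall>i. f i y \<le> f i x) \<and> (\<exists>i. f i y < f i x))}"

definition simplex_at :: "('n::finite \<Rightarrow> real^'d \<Rightarrow> real) \<Rightarrow> real^'d \<Rightarrow> (real^'n) set" where
  "simplex_at f x = {\<beta>\<in>std_simplex. grad (fbeta f \<beta>) x = 0}"

definition stat_at :: "(real^'d \<Rightarrow> real) \<Rightarrow> ('n::finite \<Rightarrow> real^'d \<Rightarrow> real) \<Rightarrow> real^'n \<Rightarrow> bool" where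
  "stat_at f0 f \<beta> \<longleftrightarrow> (\<forall>\<beta>'\<in>std_simplex. - (pref_grad f0 f \<beta> \<bullet> (\<beta>' - \<beta>)) \<le> 0)"

definition weakly_pref_stationary :: "(real^'d \<Rightarrow> real) \<Rightarrow> ('n::finite \<Rightarrow> real^'d \<Rightarrow> real) \<Rightarrow> real^'d \<Rightarrow> bool" where
  "weakly_pref_stationary f0 f x \<longleftrightarrow> x \<in> pareto f \<and> (\<exists>\<beta>\<in>simplex_at f x. stat_at f0 f \<beta>)"

definition pref_stationary :: "(real^'d \<Rightarrow> real) \<Rightarrow> ('n::finite \<Rightarrow> real^'d \<Rightarrow> real) \<Rightarrow> real^'d \<Rightarrow> bool" where
  "pref_stationary f0 f x \<longleftrightarrow> x \<in> pareto f \<and> (\<forall>\<beta>\<in>simplex_at f x. stat_at f0 f \<beta>)"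

definition pareto_generic :: "real^'d^'n \<Rightarrow> bool" where
  "pareto_generic V \<longleftrightarrow> (\<exists>\<beta>\<in>std_simplex. (\<Sum>i\<in>UNIV. \<beta> $ i *\<^sub>R V $ i) = 0)
                         \<and> rank V = CARD('n) - 1"

end

theory Submission
  imports Defs
begin

lemma tv: fixes V :: "real^'d^'n::finite"
  shows "transpose V *v b = (\<Sum>i\<in>UNIV. b $ i *\<^sub>R V $ i)"
  by (simp add: vec_eq_iff matrix_vector_mult_def transpose_def sum_component mult.commute)
lemma rank_nullity_cart: fixes A :: "real^'n::finite^'m::finite"
  shows "rank A + dim {x. A *v x = 0} = CARD('n)"
proof -
  let ?T = "\<lambda>x. A *v x"
  define K where "K = {x. A *v x = 0}"
  define W where "W = {y. \<forall>x\<in>K. orthogonal x y}"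
  have lin: "linear ?T" by (simp add: matrix_vector_mul_linear)
  have sK: "subspace K" unfolding K_def subspace_def by (simp add: matrix_vector_right_distrib linear_0[OF lin] linear_cmul[OF lin])
  have sW: "subspace W" unfolding W_def by (simp add: subspace_orthogonal_to_vectors)
  have d1: "dim W + dim K = CARD('n)"
    using dim_subspace_orthogonal_to_vectors[OF sK subspace_UNIV] unfolding W_def by simp
  have img: "?T ` W = range ?T"
  proof
    show "range ?T \<subseteq> ?T ` W"
    proof
      fix y assume "y \<in> range ?T"
      then obtain x where y: "y = ?T x" by auto
      obtain v1 v2 where v1: "v1 \<in> span K" and v2: "\<And>w. w\<in>span K \<Longrightarrow> orthogonal v2 w" and x: "x = v1 + v2"
        using orthogonal_subspace_decomp_exists[of K x] by metis
      have "v1 \<in> K" using v1 sK by (metis span_eq_iff)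
      hence "?T v1 = 0" by (simp add: K_def)
      hence "y = ?T v2" using y x by (simp add: matrix_vector_right_distrib)
      moreover have "v2 \<in> W" unfolding W_def
      proof (intro CollectI ballI)
        fix k assume "k \<in> K"
        hence "orthogonal v2 k" using v2 span_base by blast
        thus "orthogonal k v2" by (simp add: orthogonal_commute)
      qed
      ultimately show "y \<in> ?T ` W" by blast
    qed
  qed auto
  have inj: "inj_on ?T (span W)"
  proof -
    have "inj_on ?T W"
    proof (rule inj_onI)
      fix a b assume a: "a \<in> W" and b: "b \<in> W" and e: "?T a = ?T b"
      have "a - b \<in> K" using e by (simp add: K_def matrix_vector_mult_diff_distrib)
      moreover have "a - b \<in> W" using a b sW by (simp add: subspace_diff)
      ultimately have "orthogonal (a - b) (a - b)" unfolding W_def by blast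
      thus "a = b" by (simp add: orthogonal_def)
    qed
    thus ?thesis using sW by (metis span_eq_iff)
  qed
  have "dim (?T ` W) = dim W" by (rule dim_image_eq[OF lin inj])
  hence "rank A = dim W" using img by (simp add: rank_dim_range)
  thus ?thesis using d1 K_def by simp
qed

lemma subspace_ker: fixes A :: "real^'n::finite^'m::finite"
  shows "subspace {x. A *v x = 0}"
proof -
  have lin: "linear (\<lambda>x. A *v x)" by (simp add: matrix_vector_mul_linear)
  show ?thesis unfolding subspace_def by (simp add: matrix_vector_right_distrib linear_0[OF lin] linear_cmul[OF lin])
qed

lemma grad_eq:
  fixes g :: "real^'d::finite \<Rightarrow> real"
  assumes "(g has_derivative (\<lambda>h. v \<bullet> h)) (at x)"
  shows "grad g x = v"
  unfolding grad_def
proof (rule the_equality)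
  fix w assume "(g has_derivative (\<lambda>h. w \<bullet> h)) (at x)"
  hence "(\<lambda>h. w \<bullet> h) = (\<lambda>h. v \<bullet> h)" using assms by (rule has_derivative_unique)
  hence "w \<bullet> (w - v) = v \<bullet> (w - v)" by (rule fun_cong)
  hence "(w - v) \<bullet> (w - v) = 0" by (simp add: inner_diff_left)
  thus "w = v" by simp
qed (rule assms)

theorem proposition6:
  fixes f :: "'n::finite \<Rightarrow> real^'d::finite \<Rightarrow> real"
    and f0 :: "real^'d \<Rightarrow> real"
    and \<mu> L :: real
    and x :: "real^'d"
  assumes "A1 f \<mu> L"
    and "smooth f0"
    and "x \<in> pareto f"
    and "pareto_generic (\<chi> i. grad (f i) x)"
    and "weakly_pref_stationary f0 f x"
  shows "pref_stationary f0 f x"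
proof -
  have "\<forall>i. \<exists>g. \<forall>x. (f i has_derivative (\<lambda>h. g x \<bullet> h)) (at x)"
  proof
    fix i
    obtain g H where "\<forall>x. (f i has_derivative (\<lambda>h. g x \<bullet> h)) (at x)
              \<and> (g has_derivative (\<lambda>h. H x *v h)) (at x)
              \<and> (\<forall>v. \<mu> * (v \<bullet> v) \<le> v \<bullet> (H x *v v) \<and> v \<bullet> (H x *v v) \<le> L * (v \<bullet> v))"
      using assms(1) unfolding A1_def by blast
    thus "\<exists>g. \<forall>x. (f i has_derivative (\<lambda>h. g x \<bullet> h)) (at x)" by blast
  qed
  from choice[OF this] obtain G where G0: "\<forall>i. \<forall>y. (f i has_derivative (\<lambda>h. G i y \<bullet> h)) (at y)"
    by blast
  have G: "(f i has_derivative (\<lambda>h. G i y \<bullet> h)) (at y)" for i y using G0 by blast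
  define V where "V = (\<chi> i. grad (f i) x)"
  have Vi: "V $ i = G i x" for i unfolding V_def using grad_eq[OF G] by simp
  have gb: "grad (fbeta f b) x = transpose V *v b" for b
  proof -
    have "(fbeta f b has_derivative (\<lambda>h. (\<Sum>i\<in>UNIV. b $ i *\<^sub>R G i x) \<bullet> h)) (at x)"
    proof -
      have "((\<lambda>y. \<Sum>i\<in>UNIV. b $ i * f i y) has_derivative (\<lambda>h. \<Sum>i\<in>UNIV. b $ i * (G i x \<bullet> h))) (at x)"
        by (intro has_derivative_sum has_derivative_mult_right G)
      moreover have "(\<lambda>h. \<Sum>i\<in>UNIV. b $ i * (G i x \<bullet> h)) = (\<lambda>h. (\<Sum>i\<in>UNIV. b $ i *\<^sub>R G i x) \<bullet> h)"
        by (simp add: inner_sum_left)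
      ultimately show ?thesis unfolding fbeta_def[abs_def] by simp
    qed
    moreover have "(\<Sum>i\<in>UNIV. b $ i *\<^sub>R G i x) = transpose V *v b" by (simp only: tv Vi)
    ultimately have "(fbeta f b has_derivative (\<lambda>h. (transpose V *v b) \<bullet> h)) (at x)" by (simp only:)
    thus ?thesis by (rule grad_eq)
  qed
  define K where "K = {b. transpose V *v b = 0}"
  have SA: "simplex_at f x = std_simplex \<inter> K"
    unfolding simplex_at_def K_def using gb by auto
  have "rank V = CARD('n) - 1" using assms(4) unfolding pareto_generic_def V_def by simp
  hence "rank (transpose V) = CARD('n) - 1" by (simp add: rank_transpose)
  moreover have "rank (transpose V) + dim K = CARD('n)" using rank_nullity_cart[of "transpose V"] unfolding K_def .
  moreover have "CARD('n) > 0" by simp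
  ultimately have dK: "dim K = 1" by linarith
  have sK: "subspace K" unfolding K_def by (rule subspace_ker)
  obtain b0 where b0: "b0 \<in> simplex_at f x" and st: "stat_at f0 f b0"
    using assms(5) unfolding weakly_pref_stationary_def by blast
  have b0K: "b0 \<in> K" and b0S: "b0 \<in> std_simplex" using b0 SA by auto
  have sum0: "(\<Sum>i\<in>UNIV. b0 $ i) = 1" using b0S unfolding std_simplex_def by simp
  have "b0 \<noteq> 0" using sum0 by auto
  hence "dim (span {b0}) = 1" by simp
  have "span {b0} = K"
  proof (rule subspace_dim_equal)
    show "span {b0} \<subseteq> K" using sK b0K by (simp add: span_minimal)
  qed (use sK \<open>dim (span {b0}) = 1\<close> dK in auto)
  have uniq: "b = b0" if "b \<in> simplex_at f x" for b
  proof -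
    have "b \<in> K" and bS: "b \<in> std_simplex" using that SA by auto
    then obtain c where c: "b = c *\<^sub>R b0" using \<open>span {b0} = K\<close> span_singleton by blast
    have "(\<Sum>i\<in>UNIV. b $ i) = 1" using bS unfolding std_simplex_def by simp
    hence "c * (\<Sum>i\<in>UNIV. b0 $ i) = 1" unfolding c by (simp add: sum_distrib_left)
    hence "c = 1" using sum0 by simp
    thus ?thesis using c by simp
  qed
  have "\<forall>b\<in>simplex_at f x. stat_at f0 f b"
  proof
    fix b assume "b \<in> simplex_at f x"
    hence "b = b0" by (rule uniq)
    thus "stat_at f0 f b" using st by simp
  qed
  thus ?thesis unfolding pref_stationary_def using assms(3) by simp
qed

end
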